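(* Let $H$ be an almost-breakable monoid. If $\mathcal{P}_{\mathrm{fin},1}(H)$ is UmF, then every minimal factorization of every element of $\mathcal{P}_{\mathrm{fin},1}(H)$ is square-free (no irreducible occurs more than once as a letter).
   Context: A monoid $H$ is almost-breakable if for all $x,y\in H$, $xy\in\{x,y\}$ or $yx\in\{x,y\}$. $\mathcal{P}_{\mathrm{fin},1}(H)$ denotes the set of non-empty finite subsets of $H$ containing $1_H$, a monoid under $XY=\{xy:x\in X,y\in Y\}$. In a monoid $M$: $x\mid_M y$ iff $y\in MxM$; $x,y$ are associated if each divides the other; proper divisor means divides but not associated. A unit-divisor divides $1_M$; otherwise it is a non-unit-divisor. An irreducible is a non-unit-divisor $a$ with $a\neq xy$ for all non-unit-divisors $x,y$ properly dividing $a$. A factorization of $x$ is a finite word over the irreducibles with product $x$. For words $\mathfrak a,\mathfrak b$, $\mathfrak a\sqsubseteq\mathfrak b$ means $\mathfrak a$ is, up to associatedness of letters, a subword (subsequence) of some permutation of $\mathfrak b$; equivalence means $\sqsubseteq$ both ways. A factorization $\mathfrak a$ of $x$ is minimal if no factorization $\mathfrak b$ of $x$ satisfies $\mathfrak b\sqsubseteq\mathfrak a\not\sqsubseteq\mathfrak b$. $M$ is UmF if every non-unit-divisor has a factorization and any two minimal factorizations of an element are equivalent. *)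

theory Defs
  imports Main "HOL-Library.Sublist" "HOL-Library.Multiset"
begin

definition almost_breakable :: "('a::monoid_mult) itself \<Rightarrow> bool" where
  "almost_breakable _ \<longleftrightarrow> (\<forall>x y::'a. x * y \<in> {x, y} \<or> y * x \<in> {x, y})"

definition Pfin1 :: "('a::monoid_mult) set set" where
  "Pfin1 = {X. finite X \<and> X \<noteq> {} \<and> 1 \<in> X}"

definition setmul :: "('a::monoid_mult) set \<Rightarrow> 'a set \<Rightarrow> 'a set" where
  "setmul X Y = {x * y | x y. x \<in> X \<and> y \<in> Y}"

definition mdvd :: "'m set \<Rightarrow> ('m \<Rightarrow> 'm \<Rightarrow> 'm) \<Rightarrow> 'm \<Rightarrow> 'm \<Rightarrow> bool" where
  "mdvd M mul x y \<longleftrightarrow> (\<exists>a\<in>M. \<exists>b\<in>M. y = mul (mul a x) b)"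

definition massoc :: "'m set \<Rightarrow> ('m \<Rightarrow> 'm \<Rightarrow> 'm) \<Rightarrow> 'm \<Rightarrow> 'm \<Rightarrow> bool" where
  "massoc M mul x y \<longleftrightarrow> mdvd M mul x y \<and> mdvd M mul y x"

definition proper_mdvd :: "'m set \<Rightarrow> ('m \<Rightarrow> 'm \<Rightarrow> 'm) \<Rightarrow> 'm \<Rightarrow> 'm \<Rightarrow> bool" where
  "proper_mdvd M mul x y \<longleftrightarrow> mdvd M mul x y \<and> \<not> massoc M mul x y"

definition unit_divisor :: "'m set \<Rightarrow> ('m \<Rightarrow> 'm \<Rightarrow> 'm) \<Rightarrow> 'm \<Rightarrow> 'm \<Rightarrow> bool" where
  "unit_divisor M mul e x \<longleftrightarrow> x \<in> M \<and> mdvd M mul x e"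

definition non_unit_divisor :: "'m set \<Rightarrow> ('m \<Rightarrow> 'm \<Rightarrow> 'm) \<Rightarrow> 'm \<Rightarrow> 'm \<Rightarrow> bool" where
  "non_unit_divisor M mul e x \<longleftrightarrow> x \<in> M \<and> \<not> mdvd M mul x e"

definition irreducible_m :: "'m set \<Rightarrow> ('m \<Rightarrow> 'm \<Rightarrow> 'm) \<Rightarrow> 'm \<Rightarrow> 'm \<Rightarrow> bool" where
  "irreducible_m M mul e a \<longleftrightarrow> non_unit_divisor M mul e a \<and>
     \<not> (\<exists>x y. non_unit_divisor M mul e x \<and> non_unit_divisor M mul e y \<and>
             proper_mdvd M mul x a \<and> proper_mdvd M mul y a \<and> a = mul x y)"

definition wprod :: "('m \<Rightarrow> 'm \<Rightarrow> 'm) \<Rightarrow> 'm \<Rightarrow> 'm list \<Rightarrow> 'm" where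
  "wprod mul e w = foldr mul w e"

definition factorization :: "'m set \<Rightarrow> ('m \<Rightarrow> 'm \<Rightarrow> 'm) \<Rightarrow> 'm \<Rightarrow> 'm \<Rightarrow> 'm list \<Rightarrow> bool" where
  "factorization M mul e x w \<longleftrightarrow> (\<forall>a\<in>set w. irreducible_m M mul e a) \<and> wprod mul e w = x"

definition subword_m :: "'m set \<Rightarrow> ('m \<Rightarrow> 'm \<Rightarrow> 'm) \<Rightarrow> 'm list \<Rightarrow> 'm list \<Rightarrow> bool" where
  "subword_m M mul a b \<longleftrightarrow> (\<exists>p c. mset p = mset b \<and> subseq c p \<and> list_all2 (massoc M mul) a c)"

definition equiv_words :: "'m set \<Rightarrow> ('m \<Rightarrow> 'm \<Rightarrow> 'm) \<Rightarrow> 'm list \<Rightarrow> 'm list \<Rightarrow> bool" where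
  "equiv_words M mul a b \<longleftrightarrow> subword_m M mul a b \<and> subword_m M mul b a"

definition minimal_factorization :: "'m set \<Rightarrow> ('m \<Rightarrow> 'm \<Rightarrow> 'm) \<Rightarrow> 'm \<Rightarrow> 'm \<Rightarrow> 'm list \<Rightarrow> bool" where
  "minimal_factorization M mul e x a \<longleftrightarrow> factorization M mul e x a \<and>
     \<not> (\<exists>b. factorization M mul e x b \<and> subword_m M mul b a \<and> \<not> subword_m M mul a b)"

definition UmF :: "'m set \<Rightarrow> ('m \<Rightarrow> 'm \<Rightarrow> 'm) \<Rightarrow> 'm \<Rightarrow> bool" where
  "UmF M mul e \<longleftrightarrow>
     (\<forall>x. non_unit_divisor M mul e x \<longrightarrow> (\<exists>w. factorization M mul e x w)) \<and>
     (\<forall>x\<in>M. \<forall>a b. minimal_factorization M mul e x a \<and> minimal_factorization M mul e x b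
                    \<longrightarrow> equiv_words M mul a b)"

end

theory Submission
  imports Defs
begin

definition Rr :: "'a::monoid_mult \<Rightarrow> 'a \<Rightarrow> bool" where
  "Rr x y \<longleftrightarrow> x * y \<in> {x, y} \<and> y * x \<notin> {x, y}"

context
  fixes dummy :: "'a::monoid_mult itself"
  assumes AB: "\<forall>x y::'a. x * y \<in> {x, y} \<or> y * x \<in> {x, y}"
begin

lemma idem: "(x::'a) * x = x"
  using AB by auto

lemma merge1:
  fixes p x s :: 'a
  assumes "Rr p x" "Rr x s" "p * x = p" "x * s = s"
  shows "Rr p s"
proof -
  have "s * p \<noteq> p"
  proof
    assume h: "s * p = p"
    have "x * (s * p) = (x * s) * p" by (simp add: mult.assoc)
    then have "x * p = p" using h assms by simp
    then show False using assms(1) unfolding Rr_def by auto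
  qed
  moreover have "s * p \<noteq> s"
  proof
    assume h: "s * p = s"
    have "(s * p) * x = s * (p * x)" by (simp add: mult.assoc)
    then have "s * x = s" using h assms by simp
    then show False using assms(2) unfolding Rr_def by auto
  qed
  ultimately show ?thesis using AB unfolding Rr_def by blast
qed

lemma merge2:
  fixes p x s :: 'a
  assumes "Rr p x" "Rr x s" "p * x = x" "x * s = x"
  shows "Rr p s"
proof -
  have "s * p \<noteq> p"
  proof
    assume h: "s * p = p"
    have "(s * p) * x = s * (p * x)" by (simp add: mult.assoc)
    then have "s * x = x" using h assms by simp
    then show False using assms(2) unfolding Rr_def by auto
  qed
  moreover have "s * p \<noteq> s"
  proof
    assume h: "s * p = s"
    have "x * (s * p) = (x * s) * p" by (simp add: mult.assoc)
    then have "x * p = x" using h assms by simp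
    then show False using assms(1) unfolding Rr_def by auto
  qed
  ultimately show ?thesis using AB unfolding Rr_def by blast
qed

lemma chainL: "successively (\<lambda>a b. a * b = a) (xs::'a list) \<Longrightarrow> xs \<noteq> [] \<Longrightarrow> hd xs * last xs = hd xs"
proof (induction xs)
  case Nil then show ?case by simp
next
  case (Cons x xs)
  show ?case
  proof (cases "xs = []")
    case True then show ?thesis by (simp add: idem)
  next
    case False
    then have IH: "hd xs * last xs = hd xs" and e: "x * hd xs = x"
      using Cons by (auto simp: successively_Cons)
    have "x * last xs = (x * hd xs) * last xs" using e by simp
    also have "\<dots> = x * (hd xs * last xs)" by (simp add: mult.assoc)
    also have "\<dots> = x" using IH e by simp
    finally show ?thesis using False by simp
  qed
qed

lemma chainR: "successively (\<lambda>a b. a * b = b) (xs::'a list) \<Longrightarrow> xs \<noteq> [] \<Longrightarrow> hd xs * last xs = last xs"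
proof (induction xs)
  case Nil then show ?case by simp
next
  case (Cons x xs)
  show ?case
  proof (cases "xs = []")
    case True then show ?thesis by (simp add: idem)
  next
    case False
    then have IH: "hd xs * last xs = last xs" and e: "x * hd xs = hd xs"
      using Cons by (auto simp: successively_Cons)
    have "x * last xs = x * (hd xs * last xs)" using IH by simp
    also have "\<dots> = (x * hd xs) * last xs" by (simp add: mult.assoc)
    also have "\<dots> = last xs" using IH e by simp
    finally show ?thesis using False by simp
  qed
qed

lemma decomp:
  fixes xs :: "'a list"
  assumes "successively Rr xs"
    and "\<not> successively (\<lambda>a b. Rr a b \<and> a * b = a) xs"
    and "\<not> successively (\<lambda>a b. Rr a b \<and> a * b \<noteq> a) xs"
  shows "\<exists>ys a b c zs. xs = ys @ [a, b, c] @ zs \<and> (a * b = a) \<noteq> (b * c = b)"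
  using assms
proof (induction xs rule: induct_list012)
  case 1 then show ?case by simp
next
  case (2 x) then show ?case by simp
next
  case (3 x y rest)
  show ?case
  proof (cases "successively (\<lambda>a b. Rr a b \<and> a * b = a) (y # rest) \<or> successively (\<lambda>a b. Rr a b \<and> a * b \<noteq> a) (y # rest)")
    case False
    moreover have "successively Rr (y # rest)" using "3.prems"(1) by simp
    ultimately obtain ys a b c zs where "y # rest = ys @ [a, b, c] @ zs" "(a * b = a) \<noteq> (b * c = b)"
      using "3.IH"(2) by blast
    then have "x # y # rest = (x # ys) @ [a, b, c] @ zs" by simp
    then show ?thesis using \<open>(a * b = a) \<noteq> (b * c = b)\<close> by blast
  next
    case True
    have rxy: "Rr x y" using "3.prems"(1) by simp
    show ?thesis
    proof (cases rest)
      case Nil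
      then show ?thesis using "3.prems" rxy by auto
    next
      case (Cons z rest')
      from True show ?thesis
      proof
        assume h: "successively (\<lambda>a b. Rr a b \<and> a * b = a) (y # rest)"
        then have "y * z = y" using Cons by simp
        moreover have "x * y \<noteq> x" using h "3.prems"(2) rxy by auto
        ultimately show ?thesis using Cons
          by (metis append.left_neutral append_Cons)
      next
        assume h: "successively (\<lambda>a b. Rr a b \<and> a * b \<noteq> a) (y # rest)"
        then have "y * z \<noteq> y" using Cons by simp
        moreover have "x * y = x" using h "3.prems"(3) rxy by auto
        ultimately show ?thesis using Cons
          by (metis append.left_neutral append_Cons)
      qed
    qed
  qed
qed

lemma Rr_cases: "Rr a b \<Longrightarrow> a * b \<noteq> a \<Longrightarrow> a * b = b"
  unfolding Rr_def by auto

lemma pathL: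
  fixes xs :: "'a list"
  shows "successively Rr xs \<Longrightarrow> xs \<noteq> [] \<Longrightarrow> hd xs * last xs \<in> {hd xs, last xs}"
proof (induction xs rule: length_induct)
  case (1 xs)
  show ?case
  proof (cases "successively (\<lambda>a b. Rr a b \<and> a * b = a) xs")
    case True
    then have "successively (\<lambda>a b. a * b = a) xs" by (rule successively_mono) auto
    then show ?thesis using chainL "1.prems" by auto
  next
    case F1: False
    show ?thesis
    proof (cases "successively (\<lambda>a b. Rr a b \<and> a * b \<noteq> a) xs")
      case True
      then have "successively (\<lambda>a b. a * b = b) xs" by (rule successively_mono) (auto dest: Rr_cases)
      then show ?thesis using chainR "1.prems" by auto
    next
      case False
      then obtain ys a b c zs where xs: "xs = ys @ [a, b, c] @ zs" and t: "(a * b = a) \<noteq> (b * c = b)"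
        using decomp F1 "1.prems" by blast
      have ab: "Rr a b" and bc: "Rr b c"
        using "1.prems"(1) unfolding xs by (auto simp: successively_append_iff)
      have ac: "Rr a c"
      proof (cases "a * b = a")
        case True
        then have "b * c \<noteq> b" using t by simp
        then have "b * c = c" using bc Rr_cases by blast
        then show ?thesis using merge1 ab bc True by blast
      next
        case False
        then have "a * b = b" using ab Rr_cases by blast
        moreover have "b * c = b" using t False by simp
        ultimately show ?thesis using merge2 ab bc by blast
      qed
      define xs' where "xs' = ys @ [a, c] @ zs"
      have "length xs' < length xs" unfolding xs xs'_def by simp
      moreover have "successively Rr xs'"
        using "1.prems"(1) ac unfolding xs xs'_def
        by (auto simp: successively_append_iff)
      moreover have "hd xs' = hd xs" "last xs' = last xs" "xs' \<noteq> []"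
        unfolding xs xs'_def by (cases ys; simp; cases zs; simp)+
      ultimately show ?thesis using "1.IH" by metis
    qed
  qed
qed

lemma trancl_path:
  assumes "(x, y) \<in> {(a, b). Rr a b}\<^sup>+"
  shows "\<exists>xs. successively Rr (x # xs @ [y])"
  using assms
proof (induction rule: trancl_induct)
  case (base y)
  then have "successively Rr (x # [] @ [y])" by simp
  then show ?case by blast
next
  case (step y z)
  then obtain xs where "successively Rr (x # xs @ [y])" by blast
  moreover have "Rr y z" using step by simp
  ultimately have "successively Rr ((x # xs @ [y]) @ [z])"
    by (subst successively_append_iff) simp
  then have "successively Rr (x # (xs @ [y]) @ [z])" by simp
  then show ?case by blast
qed

lemma no_cycle: "(x::'a, x) \<notin> {(a, b). Rr a b}\<^sup>+"
proof
  assume "(x, x) \<in> {(a, b). Rr a b}\<^sup>+"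
  then obtain xs where p: "successively Rr (x # xs @ [x])" using trancl_path by blast
  show False
  proof (cases xs)
    case Nil
    then have "Rr x x" using p by simp
    then show False unfolding Rr_def by (simp add: idem)
  next
    case (Cons x1 xs')
    then have r: "Rr x x1" and p': "successively Rr (x1 # xs' @ [x])" using p by auto
    have "hd (x1 # xs' @ [x]) * last (x1 # xs' @ [x]) \<in> {hd (x1 # xs' @ [x]), last (x1 # xs' @ [x])}"
      using pathL[OF p'] by simp
    then have "x1 * x \<in> {x1, x}" by simp
    then show False using r unfolding Rr_def by auto
  qed
qed

lemma first_elem:
  assumes "finite (S::'a set)" "S \<noteq> {}"
  shows "\<exists>f\<in>S. \<forall>y\<in>S. f * y \<in> {f, y}"
proof -
  define r where "r = {(a, b). a \<in> S \<and> b \<in> S \<and> Rr a b}"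
  have "r \<subseteq> S \<times> S" unfolding r_def by auto
  then have fin: "finite r" using assms(1) finite_subset by blast
  have "r \<subseteq> {(a, b). Rr a b}" unfolding r_def by auto
  then have "r\<^sup>+ \<subseteq> {(a, b). Rr a b}\<^sup>+" by (rule trancl_mono_subset)
  then have "acyclic r" unfolding acyclic_def using no_cycle by (meson subsetD)
  then have "wf r" using fin by (rule finite_acyclic_wf[rotated])
  obtain x0 where "x0 \<in> S" using assms(2) by blast
  obtain z where z: "z \<in> S" "\<forall>y. (y, z) \<in> r \<longrightarrow> y \<notin> S"
    using wfE_min[OF \<open>wf r\<close> \<open>x0 \<in> S\<close>] by metis
  have "\<forall>y\<in>S. z * y \<in> {z, y}"
  proof
    fix y assume "y \<in> S"
    then have "(y, z) \<notin> r" using z by blast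
    then have "\<not> Rr y z" using \<open>y \<in> S\<close> \<open>z \<in> S\<close> by (simp add: r_def)
    moreover have "z * y \<in> {z, y} \<or> y * z \<in> {z, y}" using AB by simp
    ultimately show "z * y \<in> {z, y}" unfolding Rr_def by blast
  qed
  then show ?thesis using z by blast
qed

lemma construct:
  "finite (S::'a set) \<Longrightarrow> 1 \<notin> S \<Longrightarrow>
    \<exists>xs. distinct xs \<and> set xs = S \<and> wprod setmul {1} (map (\<lambda>x. {1, x}) xs) = insert 1 S"
proof (induction "card S" arbitrary: S rule: less_induct)
  case less
  show ?case
  proof (cases "S = {}")
    case True
    then have "distinct [] \<and> set [] = S \<and> wprod setmul {1} (map (\<lambda>x. {1, x}) []) = insert (1::'a) S"
      by (simp add: wprod_def)
    then show ?thesis by blast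
  next
    case False
    obtain f where f: "f \<in> S" "\<forall>y\<in>S. f * y \<in> {f, y}" using first_elem[OF less.prems(1) False] by blast
    define S' where "S' = S - {f}"
    have "card S' < card S" unfolding S'_def using f(1) less.prems(1) by (rule card_Diff1_less[rotated])
    moreover have "finite S'" "1 \<notin> S'" unfolding S'_def using less.prems by auto
    ultimately obtain xs where xs: "distinct xs" "set xs = S'"
      "wprod setmul {1} (map (\<lambda>x. {1, x}) xs) = insert 1 S'"
      using less.hyps by blast
    have fS': "f \<notin> S'" unfolding S'_def by simp
    have "wprod setmul {1} (map (\<lambda>x. {1, x}) (f # xs)) = setmul {1, f} (insert 1 S')"
      using xs(3) by (simp add: wprod_def)
    also have "\<dots> = insert 1 S"
    proof
      show "setmul {1, f} (insert 1 S') \<subseteq> insert 1 S"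
      proof
        fix z assume "z \<in> setmul {1, f} (insert 1 S')"
        then obtain u v where uv: "z = u * v" "u \<in> {1, f}" "v \<in> insert 1 S'" unfolding setmul_def by blast
        show "z \<in> insert 1 S"
        proof (cases "u = 1")
          case True then show ?thesis using uv S'_def by auto
        next
          case False
          then have "u = f" using uv by simp
          show ?thesis
          proof (cases "v = 1")
            case True then show ?thesis using uv \<open>u = f\<close> f(1) by simp
          next
            case False
            then have "v \<in> S" using uv S'_def by auto
            then have "f * v \<in> {f, v}" using f(2) by blast
            then show ?thesis using uv \<open>u = f\<close> f(1) \<open>v \<in> S\<close> by auto
          qed
        qed
      qed
    next
      show "insert 1 S \<subseteq> setmul {1, f} (insert 1 S')"
      proof
        fix z assume z: "z \<in> insert 1 S"
        show "z \<in> setmul {1, f} (insert 1 S')"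
        proof (cases "z = f")
          case True
          then have "z = f * 1" by simp
          then show ?thesis unfolding setmul_def by blast
        next
          case False
          then have "z \<in> insert 1 S'" using z S'_def by auto
          moreover have "z = 1 * z" by simp
          ultimately show ?thesis unfolding setmul_def by blast
        qed
      qed
    qed
    finally have "wprod setmul {1} (map (\<lambda>x. {1, x}) (f # xs)) = insert 1 S" .
    moreover have "distinct (f # xs)" using xs fS' by simp
    moreover have "set (f # xs) = S" using xs S'_def f(1) by auto
    ultimately show ?thesis by blast
  qed
qed

end

lemma mdvd_sub:
  assumes "mdvd (Pfin1::'a::monoid_mult set set) setmul X Y"
  shows "X \<subseteq> Y"
proof
  fix x assume "x \<in> X"
  from assms obtain a b where ab: "a \<in> Pfin1" "b \<in> Pfin1" "Y = setmul (setmul a X) b"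
    unfolding mdvd_def by blast
  have "1 \<in> a" "1 \<in> b" using ab unfolding Pfin1_def by auto
  have "1 * x \<in> setmul a X" unfolding setmul_def using \<open>1 \<in> a\<close> \<open>x \<in> X\<close> by blast
  then have "(1 * x) * 1 \<in> setmul (setmul a X) b" unfolding setmul_def using \<open>1 \<in> b\<close> by blast
  then show "x \<in> Y" using ab by simp
qed

lemma one_Pfin1: "{1} \<in> (Pfin1::'a::monoid_mult set set)"
  unfolding Pfin1_def by simp

lemma setmul_one_left: "setmul {1} X = (X::'a::monoid_mult set)"
  unfolding setmul_def by auto

lemma setmul_one_right: "setmul X {1} = (X::'a::monoid_mult set)"
  unfolding setmul_def by auto

lemma mdvd_refl: "mdvd (Pfin1::'a::monoid_mult set set) setmul X X"
  unfolding mdvd_def using one_Pfin1 by (metis setmul_one_left setmul_one_right)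

lemma massoc_iff: "massoc (Pfin1::'a::monoid_mult set set) setmul X Y \<longleftrightarrow> X = Y"
  unfolding massoc_def using mdvd_sub mdvd_refl by blast

lemma massoc_eq: "massoc (Pfin1::'a::monoid_mult set set) setmul = (=)"
  by (intro ext) (simp add: massoc_iff)

lemma subseq_mset: "subseq c p \<Longrightarrow> mset c \<subseteq># mset p"
proof (induction rule: list_emb.induct)
  case (list_emb_Nil ys) then show ?case by simp
next
  case (list_emb_Cons xs ys y) then show ?case
  proof -
    have "mset ys \<subseteq># mset ys + {#y#}" by simp
    then have "mset ys \<subseteq># mset (y # ys)" by simp
    then show ?case using list_emb_Cons.IH by (meson subset_mset.order_trans)
  qed
next
  case (list_emb_Cons2 x y xs ys) then show ?case by simp
qed

lemma subword_iff:
  "subword_m (Pfin1::'a::monoid_mult set set) setmul a b \<longleftrightarrow> mset a \<subseteq># mset b"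
proof
  assume "subword_m Pfin1 setmul a b"
  then obtain p c where pc: "mset p = mset b" "subseq c p" "list_all2 (massoc Pfin1 setmul) a c"
    unfolding subword_m_def by blast
  have "list_all2 (=) a c" using pc(3) by (simp add: massoc_eq)
  then have "a = c" by (simp add: list.rel_eq)
  then show "mset a \<subseteq># mset b" using subseq_mset[OF pc(2)] pc(1) by simp
next
  assume h: "mset a \<subseteq># mset b"
  obtain r where r: "mset r = mset b - mset a" using ex_mset by blast
  have "mset (a @ r) = mset b" using h r by simp
  moreover have "subseq a (a @ r)" by (simp add: subseq_rev_drop_many)
  moreover have "list_all2 (massoc Pfin1 setmul) a a" by (simp add: massoc_eq list.rel_eq)
  ultimately show "subword_m Pfin1 setmul a b" unfolding subword_m_def by blast
qed

lemma irred2: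
  assumes "(x::'a::monoid_mult) \<noteq> 1"
  shows "irreducible_m Pfin1 setmul {1} {1, x}"
proof -
  have inP: "{1, x} \<in> (Pfin1::'a set set)" unfolding Pfin1_def by simp
  have nud: "non_unit_divisor Pfin1 setmul {1} {1, x}"
    unfolding non_unit_divisor_def using inP mdvd_sub assms by blast
  have "\<not> (non_unit_divisor Pfin1 setmul {1} u \<and> proper_mdvd Pfin1 setmul u {1, x})" for u :: "'a set"
  proof
    assume h: "non_unit_divisor Pfin1 setmul {1} u \<and> proper_mdvd Pfin1 setmul u {1, x}"
    have "u \<subseteq> {1, x}" using h mdvd_sub unfolding proper_mdvd_def by blast
    moreover have "u \<noteq> {1, x}" using h massoc_iff unfolding proper_mdvd_def by blast
    moreover have "u \<noteq> {1}" using h mdvd_refl unfolding non_unit_divisor_def by blast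
    moreover have "1 \<in> u" using h unfolding non_unit_divisor_def Pfin1_def by blast
    ultimately show False by blast
  qed
  then show ?thesis unfolding irreducible_m_def using nud by blast
qed

lemma exists_min:
  "factorization (Pfin1::'a::monoid_mult set set) setmul {1} X b \<Longrightarrow>
    \<exists>b0. minimal_factorization Pfin1 setmul {1} X b0 \<and> mset b0 \<subseteq># mset b"
proof (induction b rule: length_induct)
  case (1 b)
  show ?case
  proof (cases "minimal_factorization Pfin1 setmul {1} X b")
    case True then show ?thesis by blast
  next
    case False
    then obtain c where c: "factorization Pfin1 setmul {1} X c" "mset c \<subseteq># mset b" "\<not> mset b \<subseteq># mset c"
      using "1.prems" unfolding minimal_factorization_def subword_iff by blast
    then have "mset c \<subset># mset b" by (simp add: subset_mset.less_le_not_le)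
    then have "length c < length b" using mset_subset_size by fastforce
    then obtain c0 where "minimal_factorization Pfin1 setmul {1} X c0" "mset c0 \<subseteq># mset c"
      using "1.IH" c(1) by blast
    then show ?thesis using c(2) by (meson subset_mset.order_trans)
  qed
qed

lemma distinct_sub:
  assumes "distinct b" "mset w \<subseteq># mset b"
  shows "distinct w"
proof -
  have le: "count (mset w) a \<le> 1" for a
  proof -
    have "count (mset w) a \<le> count (mset b) a" using assms(2) by (rule mset_subset_eq_count)
    moreover have "count (mset b) a \<le> 1" using assms(1) unfolding distinct_count_atmost_1 by simp
    ultimately show ?thesis by linarith
  qed
  have "count (mset w) a = (if a \<in> set w then 1 else 0)" for a
  proof (cases "a \<in> set w")
    case True
    then have "0 < count (mset w) a" by simp
    then have "count (mset w) a = 1" using le[of a] by linarith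
    then show ?thesis using True by simp
  next
    case False
    then show ?thesis by simp
  qed
  then show ?thesis unfolding distinct_count_atmost_1 by blast
qed

theorem corollary4p3:
  assumes "almost_breakable TYPE('a::monoid_mult)"
    and "UmF (Pfin1 :: 'a set set) setmul {1}"
  shows "\<forall>X \<in> (Pfin1 :: 'a set set). \<forall>w.
           minimal_factorization Pfin1 setmul {1} X w \<longrightarrow> distinct w"
proof (intro ballI allI impI)
  fix X :: "'a set" and w
  assume X: "X \<in> Pfin1" and w: "minimal_factorization Pfin1 setmul {1} X w"
  have AB: "\<forall>x y::'a. x * y \<in> {x, y} \<or> y * x \<in> {x, y}"
    using assms(1) unfolding almost_breakable_def by blast
  define S where "S = X - {1}"
  have "finite S" "1 \<notin> S" using X unfolding S_def Pfin1_def by auto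
  then obtain xs where xs: "distinct xs" "set xs = S"
      "wprod setmul {1} (map (\<lambda>x. {1, x}) xs) = insert 1 S"
    using construct[OF AB] by blast
  define b where "b = map (\<lambda>x. {1::'a, x}) xs"
  have "insert 1 S = X" using X unfolding S_def Pfin1_def by auto
  then have pb: "wprod setmul {1} b = X" using xs(3) b_def by simp
  have "\<forall>a\<in>set b. irreducible_m Pfin1 setmul {1} a"
  proof
    fix a assume "a \<in> set b"
    then obtain x where "x \<in> set xs" "a = {1, x}" unfolding b_def by auto
    then have "x \<noteq> 1" using xs(2) \<open>1 \<notin> S\<close> by blast
    then show "irreducible_m Pfin1 setmul {1} a" using irred2 \<open>a = {1, x}\<close> by blast
  qed
  then have fb: "factorization Pfin1 setmul {1} X b" unfolding factorization_def using pb by blast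
  have "inj_on (\<lambda>x. {1::'a, x}) (set xs)"
  proof (rule inj_onI)
    fix x y assume "x \<in> set xs" "y \<in> set xs" "{1::'a, x} = {1, y}"
    moreover have "x \<noteq> 1" "y \<noteq> 1" using calculation(1,2) xs(2) \<open>1 \<notin> S\<close> by blast+
    ultimately show "x = y" by (metis insert_iff singletonD)
  qed
  then have db: "distinct b" unfolding b_def using xs(1) by (simp add: distinct_map)
  obtain b0 where b0: "minimal_factorization Pfin1 setmul {1} X b0" "mset b0 \<subseteq># mset b"
    using exists_min[OF fb] by blast
  have "equiv_words Pfin1 setmul w b0" using assms(2) X w b0(1) unfolding UmF_def by blast
  then have "mset w \<subseteq># mset b0" unfolding equiv_words_def subword_iff by blast
  then have "mset w \<subseteq># mset b" using b0(2) by (meson subset_mset.order_trans)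
  then show "distinct w" using distinct_sub db by blast
qed

end
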